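(* Let $\mathcal K$ be a finitely complete 2-category with a good yoneda structure. Let $C$ be small, $i:M\to\mathcal PC$ and $f:C\to A$ with $M$ and $f$ admissible. Then the colimit of $f$ weighted by $i$ exists iff there is an admissible 1-cell $\mathrm{col}(i,f):M\to A$ together with an isomorphism $A(\mathrm{col}(i,f),1)\cong\mathcal PC(i,A(f,1))$.
   Context: Given $f:A\to C$, $g:A\to B$, $h:B\to C$, a 2-cell $\phi:f\Rightarrow hg$ exhibits $g$ as a left lifting of $f$ along (through) $h$ if for every $k:A\to B$, $\kappa\mapsto(h\kappa)\cdot\phi$ is a bijection from 2-cells $g\Rightarrow k$ to 2-cells $f\Rightarrow hk$; it is absolute if $\phi j$ exhibits $gj$ as a left lifting of $fj$ along $h$ for all $j:D\to A$; $\phi$ exhibits $h$ as a left extension of $f$ along $g$ if for every $k:B\to C$, $\kappa\mapsto(\kappa g)\cdot\phi$ is a bijection from 2-cells $h\Rightarrow k$ to 2-cells $f\Rightarrow kg$; it is pointwise if for every $c:X\to B$, with lax pullback $p:g/c\to A$, $q:g/c\to X$, $\lambda:gp\Rightarrow cq$, $(h\lambda)\cdot(\phi p)$ exhibits $hc$ as a left extension of $fp$ along $q$. A good yoneda structure on a finitely complete 2-category: a class of admissible 1-cells with $fg$ admissible whenever $f$ is; an object $A$ is admissible when $1_A$ is; for admissible $A$ an object $\mathcal PA$ and admissible $y_A:A\to\mathcal PA$; for $f:A\to B$ with $A$, $f$ admissible a 1-cell $B(f,1):B\to\mathcal PA$ and 2-cell $\chi^f:y_A\Rightarrow B(f,1)f$;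 such that (i) $\chi^f$ exhibits $f$ as an absolute left lifting of $y_A$ through $B(f,1)$; (ii) if $A$, $f:A\to B$ admissible and $\psi:y_A\Rightarrow kf$ exhibits $f$ as an absolute left lifting of $y_A$ along $k$, then $\psi$ exhibits $k$ as a pointwise left extension of $y_A$ along $f$. $C$ is small if $C$ and $\mathcal PC$ are admissible. Notation: $B(f,x)$ means $B(f,1)x$; thus for admissible $i:M\to\mathcal PC$ (admissible here since $\mathcal PC$ is admissible), $\mathcal PC(i,A(f,1))=\mathcal PC(i,1)A(f,1):A\to\mathcal PM$. For $C$ small, $i:M\to\mathcal PC$, $f:C\to A$ with $M$, $f$ admissible, a colimit of $f$ weighted by $i$ is an admissible $\mathrm{col}(i,f):M\to A$ with a 2-cell $\eta:i\Rightarrow A(f,1)\mathrm{col}(i,f)$ exhibiting $\mathrm{col}(i,f)$ as an absolute left lifting of $i$ through $A(f,1)$. *)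

theory Defs
  imports Main
begin

text \<open>A (strict) 2-category given by carrier sets of objects, 1-cells and 2-cells.
 c1 K g f is the composite g f (first f, then g); vc K b a is vertical composite b . a
 (first a); hc K b a is horizontal composite b * a (a on the right, i.e. acting first).\<close>

record ('o,'a,'c) tcat =
  ob  :: "'o set"
  ar  :: "'a set"
  ce  :: "'c set"
  s1  :: "'a \<Rightarrow> 'o"
  t1  :: "'a \<Rightarrow> 'o"
  id1 :: "'o \<Rightarrow> 'a"
  c1  :: "'a \<Rightarrow> 'a \<Rightarrow> 'a"
  s2  :: "'c \<Rightarrow> 'a"
  t2  :: "'c \<Rightarrow> 'a"
  id2 :: "'a \<Rightarrow> 'c"
  vc  :: "'c \<Rightarrow> 'c \<Rightarrow> 'c"
  hc  :: "'c \<Rightarrow> 'c \<Rightarrow> 'c"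

definition hom1 :: "('o,'a,'c) tcat \<Rightarrow> 'o \<Rightarrow> 'o \<Rightarrow> 'a \<Rightarrow> bool" where
  "hom1 K X Y f \<longleftrightarrow> f \<in> ar K \<and> s1 K f = X \<and> t1 K f = Y"

definition cell :: "('o,'a,'c) tcat \<Rightarrow> 'a \<Rightarrow> 'a \<Rightarrow> 'c \<Rightarrow> bool" where
  "cell K f g \<alpha> \<longleftrightarrow> \<alpha> \<in> ce K \<and> s2 K \<alpha> = f \<and> t2 K \<alpha> = g"

definition wl :: "('o,'a,'c) tcat \<Rightarrow> 'a \<Rightarrow> 'c \<Rightarrow> 'c" where
  "wl K h \<alpha> = hc K (id2 K h) \<alpha>"
definition wr :: "('o,'a,'c) tcat \<Rightarrow> 'c \<Rightarrow> 'a \<Rightarrow> 'c" where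
  "wr K \<alpha> j = hc K \<alpha> (id2 K j)"

definition twocat :: "('o,'a,'c) tcat \<Rightarrow> bool" where
  "twocat K \<longleftrightarrow>
    (\<forall>f\<in>ar K. s1 K f \<in> ob K \<and> t1 K f \<in> ob K) \<and>
    (\<forall>X\<in>ob K. hom1 K X X (id1 K X)) \<and>
    (\<forall>f\<in>ar K. \<forall>g\<in>ar K. t1 K f = s1 K g \<longrightarrow> hom1 K (s1 K f) (t1 K g) (c1 K g f)) \<and>
    (\<forall>f\<in>ar K. \<forall>g\<in>ar K. \<forall>h\<in>ar K. t1 K f = s1 K g \<and> t1 K g = s1 K h \<longrightarrow>
        c1 K h (c1 K g f) = c1 K (c1 K h g) f) \<and>
    (\<forall>f\<in>ar K. c1 K (id1 K (t1 K f)) f = f \<and> c1 K f (id1 K (s1 K f)) = f) \<and>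
    (\<forall>\<alpha>\<in>ce K. s2 K \<alpha> \<in> ar K \<and> t2 K \<alpha> \<in> ar K \<and>
        s1 K (s2 K \<alpha>) = s1 K (t2 K \<alpha>) \<and> t1 K (s2 K \<alpha>) = t1 K (t2 K \<alpha>)) \<and>
    (\<forall>f\<in>ar K. cell K f f (id2 K f)) \<and>
    (\<forall>\<alpha>\<in>ce K. \<forall>\<beta>\<in>ce K. t2 K \<alpha> = s2 K \<beta> \<longrightarrow> cell K (s2 K \<alpha>) (t2 K \<beta>) (vc K \<beta> \<alpha>)) \<and>
    (\<forall>\<alpha>\<in>ce K. \<forall>\<beta>\<in>ce K. \<forall>\<gamma>\<in>ce K. t2 K \<alpha> = s2 K \<beta> \<and> t2 K \<beta> = s2 K \<gamma> \<longrightarrow>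
        vc K \<gamma> (vc K \<beta> \<alpha>) = vc K (vc K \<gamma> \<beta>) \<alpha>) \<and>
    (\<forall>\<alpha>\<in>ce K. vc K (id2 K (t2 K \<alpha>)) \<alpha> = \<alpha> \<and> vc K \<alpha> (id2 K (s2 K \<alpha>)) = \<alpha>) \<and>
    (\<forall>\<alpha>\<in>ce K. \<forall>\<beta>\<in>ce K. t1 K (s2 K \<alpha>) = s1 K (s2 K \<beta>) \<longrightarrow>
        cell K (c1 K (s2 K \<beta>) (s2 K \<alpha>)) (c1 K (t2 K \<beta>) (t2 K \<alpha>)) (hc K \<beta> \<alpha>)) \<and>
    (\<forall>\<alpha>\<in>ce K. \<forall>\<beta>\<in>ce K. \<forall>\<gamma>\<in>ce K.
        t1 K (s2 K \<alpha>) = s1 K (s2 K \<beta>) \<and> t1 K (s2 K \<beta>) = s1 K (s2 K \<gamma>) \<longrightarrow>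
        hc K \<gamma> (hc K \<beta> \<alpha>) = hc K (hc K \<gamma> \<beta>) \<alpha>) \<and>
    (\<forall>\<alpha>\<in>ce K. hc K (id2 K (id1 K (t1 K (s2 K \<alpha>)))) \<alpha> = \<alpha> \<and>
                hc K \<alpha> (id2 K (id1 K (s1 K (s2 K \<alpha>)))) = \<alpha>) \<and>
    (\<forall>f\<in>ar K. \<forall>g\<in>ar K. t1 K f = s1 K g \<longrightarrow> hc K (id2 K g) (id2 K f) = id2 K (c1 K g f)) \<and>
    (\<forall>\<alpha>\<in>ce K. \<forall>\<alpha>'\<in>ce K. \<forall>\<beta>\<in>ce K. \<forall>\<beta>'\<in>ce K.
        t2 K \<alpha> = s2 K \<alpha>' \<and> t2 K \<beta> = s2 K \<beta>' \<and> t1 K (s2 K \<alpha>) = s1 K (s2 K \<beta>) \<longrightarrow>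
        hc K (vc K \<beta>' \<beta>) (vc K \<alpha>' \<alpha>) = vc K (hc K \<beta>' \<alpha>') (hc K \<beta> \<alpha>))"

definition iso2 :: "('o,'a,'c) tcat \<Rightarrow> 'c \<Rightarrow> 'a \<Rightarrow> 'a \<Rightarrow> bool" where
  "iso2 K \<theta> f g \<longleftrightarrow> cell K f g \<theta> \<and>
     (\<exists>\<theta>'. cell K g f \<theta>' \<and> vc K \<theta>' \<theta> = id2 K f \<and> vc K \<theta> \<theta>' = id2 K g)"

definition is_terminal :: "('o,'a,'c) tcat \<Rightarrow> 'o \<Rightarrow> bool" where
  "is_terminal K T \<longleftrightarrow> T \<in> ob K \<and>
     (\<forall>X\<in>ob K. \<exists>t. hom1 K X T t \<and> (\<forall>t'. hom1 K X T t' \<longrightarrow> t' = t) \<and>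
                      (\<forall>\<alpha>. cell K t t \<alpha> \<longrightarrow> \<alpha> = id2 K t))"

definition is_pullback :: "('o,'a,'c) tcat \<Rightarrow> 'a \<Rightarrow> 'a \<Rightarrow> 'o \<Rightarrow> 'a \<Rightarrow> 'a \<Rightarrow> bool" where
  "is_pullback K f g P p q \<longleftrightarrow>
     hom1 K P (s1 K f) p \<and> hom1 K P (s1 K g) q \<and> c1 K f p = c1 K g q \<and>
     (\<forall>X\<in>ob K. \<forall>u v. hom1 K X (s1 K f) u \<and> hom1 K X (s1 K g) v \<and> c1 K f u = c1 K g v \<longrightarrow>
        (\<exists>!w. hom1 K X P w \<and> c1 K p w = u \<and> c1 K q w = v)) \<and>
     (\<forall>X\<in>ob K. \<forall>w w' \<alpha> \<beta>. hom1 K X P w \<and> hom1 K X P w' \<and>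
        cell K (c1 K p w) (c1 K p w') \<alpha> \<and> cell K (c1 K q w) (c1 K q w') \<beta> \<and>
        wl K f \<alpha> = wl K g \<beta> \<longrightarrow>
        (\<exists>!\<theta>. cell K w w' \<theta> \<and> wl K p \<theta> = \<alpha> \<and> wl K q \<theta> = \<beta>))"

definition is_comma :: "('o,'a,'c) tcat \<Rightarrow> 'a \<Rightarrow> 'a \<Rightarrow> 'o \<Rightarrow> 'a \<Rightarrow> 'a \<Rightarrow> 'c \<Rightarrow> bool" where
  "is_comma K f g P p q lam \<longleftrightarrow>
     t1 K f = t1 K g \<and>
     hom1 K P (s1 K f) p \<and> hom1 K P (s1 K g) q \<and> cell K (c1 K f p) (c1 K g q) lam \<and>
     (\<forall>X\<in>ob K. \<forall>u v \<mu>. hom1 K X (s1 K f) u \<and> hom1 K X (s1 K g) v \<and>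
        cell K (c1 K f u) (c1 K g v) \<mu> \<longrightarrow>
        (\<exists>!w. hom1 K X P w \<and> c1 K p w = u \<and> c1 K q w = v \<and> wr K lam w = \<mu>)) \<and>
     (\<forall>X\<in>ob K. \<forall>w w' \<alpha> \<beta>. hom1 K X P w \<and> hom1 K X P w' \<and>
        cell K (c1 K p w) (c1 K p w') \<alpha> \<and> cell K (c1 K q w) (c1 K q w') \<beta> \<and>
        vc K (wl K g \<beta>) (wr K lam w) = vc K (wr K lam w') (wl K f \<alpha>) \<longrightarrow>
        (\<exists>!\<theta>. cell K w w' \<theta> \<and> wl K p \<theta> = \<alpha> \<and> wl K q \<theta> = \<beta>))"

text \<open>Finitely complete: terminal object, all 2-pullbacks and all comma objects
  (these generate all finite weighted limits).\<close>
definition fin_complete :: "('o,'a,'c) tcat \<Rightarrow> bool" where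
  "fin_complete K \<longleftrightarrow>
     (\<exists>T. is_terminal K T) \<and>
     (\<forall>f g. f \<in> ar K \<and> g \<in> ar K \<and> t1 K f = t1 K g \<longrightarrow> (\<exists>P p q. is_pullback K f g P p q)) \<and>
     (\<forall>f g. f \<in> ar K \<and> g \<in> ar K \<and> t1 K f = t1 K g \<longrightarrow> (\<exists>P p q lam. is_comma K f g P p q lam))"

text \<open>phi : f => h g exhibits g as a left lifting of f along h (f : A -> C, g : A -> B, h : B -> C).\<close>
definition left_lifting :: "('o,'a,'c) tcat \<Rightarrow> 'c \<Rightarrow> 'a \<Rightarrow> 'a \<Rightarrow> 'a \<Rightarrow> bool" where
  "left_lifting K \<phi> f g h \<longleftrightarrow>
     f \<in> ar K \<and> g \<in> ar K \<and> h \<in> ar K \<and>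
     s1 K g = s1 K f \<and> t1 K g = s1 K h \<and> t1 K h = t1 K f \<and>
     cell K f (c1 K h g) \<phi> \<and>
     (\<forall>k. hom1 K (s1 K g) (t1 K g) k \<longrightarrow>
        bij_betw (\<lambda>\<kappa>. vc K (wl K h \<kappa>) \<phi>) {\<kappa>. cell K g k \<kappa>} {\<psi>. cell K f (c1 K h k) \<psi>})"

definition abs_left_lifting :: "('o,'a,'c) tcat \<Rightarrow> 'c \<Rightarrow> 'a \<Rightarrow> 'a \<Rightarrow> 'a \<Rightarrow> bool" where
  "abs_left_lifting K \<phi> f g h \<longleftrightarrow> left_lifting K \<phi> f g h \<and>
     (\<forall>D j. hom1 K D (s1 K f) j \<longrightarrow> left_lifting K (wr K \<phi> j) (c1 K f j) (c1 K g j) h)"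

definition left_ext :: "('o,'a,'c) tcat \<Rightarrow> 'c \<Rightarrow> 'a \<Rightarrow> 'a \<Rightarrow> 'a \<Rightarrow> bool" where
  "left_ext K \<phi> f g h \<longleftrightarrow>
     f \<in> ar K \<and> g \<in> ar K \<and> h \<in> ar K \<and>
     s1 K g = s1 K f \<and> t1 K g = s1 K h \<and> t1 K h = t1 K f \<and>
     cell K f (c1 K h g) \<phi> \<and>
     (\<forall>k. hom1 K (s1 K h) (t1 K h) k \<longrightarrow>
        bij_betw (\<lambda>\<kappa>. vc K (wr K \<kappa> g) \<phi>) {\<kappa>. cell K h k \<kappa>} {\<psi>. cell K f (c1 K k g) \<psi>})"

definition pw_left_ext :: "('o,'a,'c) tcat \<Rightarrow> 'c \<Rightarrow> 'a \<Rightarrow> 'a \<Rightarrow> 'a \<Rightarrow> bool" where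
  "pw_left_ext K \<phi> f g h \<longleftrightarrow> left_ext K \<phi> f g h \<and>
     (\<forall>X c P p q lam. hom1 K X (t1 K g) c \<and> is_comma K g c P p q lam \<longrightarrow>
        left_ext K (vc K (wl K h lam) (wr K \<phi> p)) (c1 K f p) q (c1 K h c))"

record ('o,'a,'c) ystr =
  adm :: "'a \<Rightarrow> bool"
  PP  :: "'o \<Rightarrow> 'o"
  yo  :: "'o \<Rightarrow> 'a"
  rep :: "'a \<Rightarrow> 'a"        \<comment> \<open>rep f = B(f,1) for f : A -> B\<close>
  chi :: "'a \<Rightarrow> 'c"

definition adm_ob :: "('o,'a,'c) ystr \<Rightarrow> ('o,'a,'c) tcat \<Rightarrow> 'o \<Rightarrow> bool" where
  "adm_ob Y K A \<longleftrightarrow> adm Y (id1 K A)"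

definition good_yoneda :: "('o,'a,'c) tcat \<Rightarrow> ('o,'a,'c) ystr \<Rightarrow> bool" where
  "good_yoneda K Y \<longleftrightarrow>
     (\<forall>f. adm Y f \<longrightarrow> f \<in> ar K) \<and>
     (\<forall>f g. adm Y f \<and> g \<in> ar K \<and> t1 K g = s1 K f \<longrightarrow> adm Y (c1 K f g)) \<and>
     (\<forall>A\<in>ob K. adm_ob Y K A \<longrightarrow>
        PP Y A \<in> ob K \<and> hom1 K A (PP Y A) (yo Y A) \<and> adm Y (yo Y A)) \<and>
     (\<forall>f. adm Y f \<and> adm_ob Y K (s1 K f) \<longrightarrow>
        hom1 K (t1 K f) (PP Y (s1 K f)) (rep Y f) \<and>
        cell K (yo Y (s1 K f)) (c1 K (rep Y f) f) (chi Y f) \<and>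
        abs_left_lifting K (chi Y f) (yo Y (s1 K f)) f (rep Y f)) \<and>
     (\<forall>f k \<psi>. adm Y f \<and> adm_ob Y K (s1 K f) \<and>
        abs_left_lifting K \<psi> (yo Y (s1 K f)) f k \<longrightarrow>
        pw_left_ext K \<psi> (yo Y (s1 K f)) f k)"

definition small :: "('o,'a,'c) tcat \<Rightarrow> ('o,'a,'c) ystr \<Rightarrow> 'o \<Rightarrow> bool" where
  "small K Y C \<longleftrightarrow> C \<in> ob K \<and> adm_ob Y K C \<and> adm_ob Y K (PP Y C)"

definition is_wcolimit ::
  "('o,'a,'c) tcat \<Rightarrow> ('o,'a,'c) ystr \<Rightarrow> 'a \<Rightarrow> 'a \<Rightarrow> 'a \<Rightarrow> 'c \<Rightarrow> bool" where
  "is_wcolimit K Y i f col \<eta> \<longleftrightarrow>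
     adm Y col \<and> hom1 K (s1 K i) (t1 K f) col \<and>
     cell K i (c1 K (rep Y f) col) \<eta> \<and>
     abs_left_lifting K \<eta> i col (rep Y f)"

definition has_wcolimit :: "('o,'a,'c) tcat \<Rightarrow> ('o,'a,'c) ystr \<Rightarrow> 'a \<Rightarrow> 'a \<Rightarrow> bool" where
  "has_wcolimit K Y i f \<longleftrightarrow> (\<exists>col \<eta>. is_wcolimit K Y i f col \<eta>)"

end

theory Submission
  imports Defs
begin


locale tc = fixes K :: "('o,'a,'c) tcat" assumes tc: "twocat K"
begin

lemmas T = tc[unfolded twocat_def]
lemmas T1 = T[THEN conjunct1]
lemmas T2 = T[THEN conjunct2, THEN conjunct1]
lemmas T3 = T[THEN conjunct2, THEN conjunct2, THEN conjunct1]
lemmas T4 = T[THEN conjunct2, THEN conjunct2, THEN conjunct2, THEN conjunct1]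
lemmas T5 = T[THEN conjunct2, THEN conjunct2, THEN conjunct2, THEN conjunct2, THEN conjunct1]
lemmas T6 = T[THEN conjunct2, THEN conjunct2, THEN conjunct2, THEN conjunct2, THEN conjunct2, THEN conjunct1]
lemmas T7 = T[THEN conjunct2, THEN conjunct2, THEN conjunct2, THEN conjunct2, THEN conjunct2, THEN conjunct2, THEN conjunct1]
lemmas T8 = T[THEN conjunct2, THEN conjunct2, THEN conjunct2, THEN conjunct2, THEN conjunct2, THEN conjunct2, THEN conjunct2, THEN conjunct1]
lemmas T9 = T[THEN conjunct2, THEN conjunct2, THEN conjunct2, THEN conjunct2, THEN conjunct2, THEN conjunct2, THEN conjunct2, THEN conjunct2, THEN conjunct1]
lemmas T10 = T[THEN conjunct2, THEN conjunct2, THEN conjunct2, THEN conjunct2, THEN conjunct2, THEN conjunct2, THEN conjunct2, THEN conjunct2, THEN conjunct2, THEN conjunct1]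
lemmas T11 = T[THEN conjunct2, THEN conjunct2, THEN conjunct2, THEN conjunct2, THEN conjunct2, THEN conjunct2, THEN conjunct2, THEN conjunct2, THEN conjunct2, THEN conjunct2, THEN conjunct1]
lemmas T12 = T[THEN conjunct2, THEN conjunct2, THEN conjunct2, THEN conjunct2, THEN conjunct2, THEN conjunct2, THEN conjunct2, THEN conjunct2, THEN conjunct2, THEN conjunct2, THEN conjunct2, THEN conjunct1]
lemmas T13 = T[THEN conjunct2, THEN conjunct2, THEN conjunct2, THEN conjunct2, THEN conjunct2, THEN conjunct2, THEN conjunct2, THEN conjunct2, THEN conjunct2, THEN conjunct2, THEN conjunct2, THEN conjunct2, THEN conjunct1]
lemmas T14 = T[THEN conjunct2, THEN conjunct2, THEN conjunct2, THEN conjunct2, THEN conjunct2, THEN conjunct2, THEN conjunct2, THEN conjunct2, THEN conjunct2, THEN conjunct2, THEN conjunct2, THEN conjunct2, THEN conjunct2, THEN conjunct1]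
lemmas T15 = T[THEN conjunct2, THEN conjunct2, THEN conjunct2, THEN conjunct2, THEN conjunct2, THEN conjunct2, THEN conjunct2, THEN conjunct2, THEN conjunct2, THEN conjunct2, THEN conjunct2, THEN conjunct2, THEN conjunct2, THEN conjunct2]

lemma ar_ob: "f \<in> ar K \<Longrightarrow> s1 K f \<in> ob K \<and> t1 K f \<in> ob K"
  using T1 by blast
lemma id1_hom: "X \<in> ob K \<Longrightarrow> hom1 K X X (id1 K X)"
  using T2 by blast
lemma comp_hom: "hom1 K X Y f \<Longrightarrow> hom1 K Y Z g \<Longrightarrow> hom1 K X Z (c1 K g f)"
  using T3 hom1_def by metis
lemma assoc: "hom1 K X Y f \<Longrightarrow> hom1 K Y Z g \<Longrightarrow> hom1 K Z W h \<Longrightarrow>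
   c1 K h (c1 K g f) = c1 K (c1 K h g) f"
  using T4 hom1_def by metis
lemma idl: "hom1 K X Y f \<Longrightarrow> c1 K (id1 K Y) f = f"
  using T5 hom1_def by metis
lemma idr: "hom1 K X Y f \<Longrightarrow> c1 K f (id1 K X) = f"
  using T5 hom1_def by metis
lemma cell_ar: "cell K f g a \<Longrightarrow> f \<in> ar K \<and> g \<in> ar K \<and> s1 K f = s1 K g \<and> t1 K f = t1 K g"
  using T6 cell_def by metis
lemma id2_cell: "f \<in> ar K \<Longrightarrow> cell K f f (id2 K f)"
  using T7 by blast
lemma vc_cell: "cell K f g a \<Longrightarrow> cell K g h b \<Longrightarrow> cell K f h (vc K b a)"
  using T8 cell_def by metis
lemma vc_assoc: "cell K f g a \<Longrightarrow> cell K g h b \<Longrightarrow> cell K h k c \<Longrightarrow>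
   vc K c (vc K b a) = vc K (vc K c b) a"
  using T9 cell_def by metis
lemma vc_idl: "cell K f g a \<Longrightarrow> vc K (id2 K g) a = a"
  using T10 cell_def by metis
lemma vc_idr: "cell K f g a \<Longrightarrow> vc K a (id2 K f) = a"
  using T10 cell_def by metis
lemma hc_cell: "cell K f g a \<Longrightarrow> cell K f' g' b \<Longrightarrow> t1 K f = s1 K f' \<Longrightarrow>
   cell K (c1 K f' f) (c1 K g' g) (hc K b a)"
proof -
  assume a: "cell K f g a" "cell K f' g' b" "t1 K f = s1 K f'"
  have "\<forall>\<alpha>\<in>ce K. \<forall>\<beta>\<in>ce K. t1 K (s2 K \<alpha>) = s1 K (s2 K \<beta>) \<longrightarrow>
        cell K (c1 K (s2 K \<beta>) (s2 K \<alpha>)) (c1 K (t2 K \<beta>) (t2 K \<alpha>)) (hc K \<beta> \<alpha>)"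
    using T11 by blast
  then show ?thesis using a unfolding cell_def by metis
qed
lemma hc_assoc: "cell K f g a \<Longrightarrow> cell K f' g' b \<Longrightarrow> cell K f'' g'' c \<Longrightarrow>
   t1 K f = s1 K f' \<Longrightarrow> t1 K f' = s1 K f'' \<Longrightarrow> hc K c (hc K b a) = hc K (hc K c b) a"
proof -
  assume a: "cell K f g a" "cell K f' g' b" "cell K f'' g'' c" "t1 K f = s1 K f'" "t1 K f' = s1 K f''"
  have "\<forall>\<alpha>\<in>ce K. \<forall>\<beta>\<in>ce K. \<forall>\<gamma>\<in>ce K.
        t1 K (s2 K \<alpha>) = s1 K (s2 K \<beta>) \<and> t1 K (s2 K \<beta>) = s1 K (s2 K \<gamma>) \<longrightarrow>
        hc K \<gamma> (hc K \<beta> \<alpha>) = hc K (hc K \<gamma> \<beta>) \<alpha>"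
    using T12 by blast
  then show ?thesis using a unfolding cell_def by metis
qed
lemma hc_id: "f \<in> ar K \<Longrightarrow> g \<in> ar K \<Longrightarrow> t1 K f = s1 K g \<Longrightarrow>
   hc K (id2 K g) (id2 K f) = id2 K (c1 K g f)"
  using T14 by blast
lemma interchange: "cell K f g a \<Longrightarrow> cell K g h a' \<Longrightarrow> cell K f' g' b \<Longrightarrow> cell K g' h' b' \<Longrightarrow>
   t1 K f = s1 K f' \<Longrightarrow> hc K (vc K b' b) (vc K a' a) = vc K (hc K b' a') (hc K b a)"
proof -
  assume a: "cell K f g a" "cell K g h a'" "cell K f' g' b" "cell K g' h' b'" "t1 K f = s1 K f'"
  have "\<forall>\<alpha>\<in>ce K. \<forall>\<alpha>'\<in>ce K. \<forall>\<beta>\<in>ce K. \<forall>\<beta>'\<in>ce K.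
        t2 K \<alpha> = s2 K \<alpha>' \<and> t2 K \<beta> = s2 K \<beta>' \<and> t1 K (s2 K \<alpha>) = s1 K (s2 K \<beta>) \<longrightarrow>
        hc K (vc K \<beta>' \<beta>) (vc K \<alpha>' \<alpha>) = vc K (hc K \<beta>' \<alpha>') (hc K \<beta> \<alpha>)"
    using T15 by blast
  then show ?thesis using a unfolding cell_def by metis
qed

lemma hom_ar: "hom1 K X Y f \<Longrightarrow> f \<in> ar K" unfolding hom1_def by simp

lemma wl_cell: "hom1 K Y Z h \<Longrightarrow> cell K f g a \<Longrightarrow> t1 K f = Y \<Longrightarrow>
   cell K (c1 K h f) (c1 K h g) (wl K h a)"
  unfolding wl_def by (rule hc_cell) (auto simp: hom1_def intro: id2_cell)
lemma wr_cell: "cell K f g a \<Longrightarrow> hom1 K X Y j \<Longrightarrow> s1 K f = Y \<Longrightarrow>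
   cell K (c1 K f j) (c1 K g j) (wr K a j)"
  unfolding wr_def by (rule hc_cell) (auto simp: hom1_def intro: id2_cell)

lemma vc_idid: "f \<in> ar K \<Longrightarrow> vc K (id2 K f) (id2 K f) = id2 K f"
  using vc_idl id2_cell by blast

lemma wl_vc: "hom1 K Y Z h \<Longrightarrow> cell K f g a \<Longrightarrow> cell K g k b \<Longrightarrow> t1 K f = Y \<Longrightarrow>
   wl K h (vc K b a) = vc K (wl K h b) (wl K h a)"
proof -
  assume a: "hom1 K Y Z h" "cell K f g a" "cell K g k b" "t1 K f = Y"
  have h: "cell K h h (id2 K h)" using a hom_ar id2_cell by blast
  have "wl K h (vc K b a) = hc K (vc K (id2 K h) (id2 K h)) (vc K b a)"
    unfolding wl_def using vc_idid a hom_ar by metis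
  also have "\<dots> = vc K (hc K (id2 K h) b) (hc K (id2 K h) a)"
    by (rule interchange[OF a(2) a(3) h h]) (use a in \<open>auto simp: hom1_def\<close>)
  finally show ?thesis unfolding wl_def .
qed

lemma wr_vc: "cell K f g a \<Longrightarrow> cell K g k b \<Longrightarrow> hom1 K X Y j \<Longrightarrow> s1 K f = Y \<Longrightarrow>
   wr K (vc K b a) j = vc K (wr K b j) (wr K a j)"
proof -
  assume a: "cell K f g a" "cell K g k b" "hom1 K X Y j" "s1 K f = Y"
  have h: "cell K j j (id2 K j)" using a hom_ar id2_cell by blast
  have "wr K (vc K b a) j = hc K (vc K b a) (vc K (id2 K j) (id2 K j))"
    unfolding wr_def using vc_idid a hom_ar by metis
  also have "\<dots> = vc K (hc K b (id2 K j)) (hc K a (id2 K j))"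
    by (rule interchange[OF h h a(1) a(2)]) (use a in \<open>auto simp: hom1_def\<close>)
  finally show ?thesis unfolding wr_def .
qed

lemma wl_id: "hom1 K X Y k \<Longrightarrow> hom1 K Y Z h \<Longrightarrow> wl K h (id2 K k) = id2 K (c1 K h k)"
  unfolding wl_def by (rule hc_id) (auto simp: hom1_def)
lemma wr_id: "hom1 K X Y j \<Longrightarrow> hom1 K Y Z h \<Longrightarrow> wr K (id2 K h) j = id2 K (c1 K h j)"
  unfolding wr_def by (rule hc_id) (auto simp: hom1_def)

lemma wl_comp: "hom1 K Y Z h1 \<Longrightarrow> hom1 K Z W h2 \<Longrightarrow> cell K f g a \<Longrightarrow> t1 K f = Y \<Longrightarrow>
   wl K (c1 K h2 h1) a = wl K h2 (wl K h1 a)"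
proof -
  assume a: "hom1 K Y Z h1" "hom1 K Z W h2" "cell K f g a" "t1 K f = Y"
  have "wl K (c1 K h2 h1) a = hc K (hc K (id2 K h2) (id2 K h1)) a"
    unfolding wl_def using hc_id a by (auto simp: hom1_def)
  also have "\<dots> = hc K (id2 K h2) (hc K (id2 K h1) a)"
    by (rule hc_assoc[symmetric, OF a(3)]) (use a in \<open>auto simp: hom1_def intro: id2_cell\<close>)
  finally show ?thesis unfolding wl_def .
qed

lemma wr_comp: "cell K f g a \<Longrightarrow> hom1 K Y X j \<Longrightarrow> hom1 K W Y j' \<Longrightarrow> s1 K f = X \<Longrightarrow>
   wr K (wr K a j) j' = wr K a (c1 K j j')"
proof -
  assume a: "cell K f g a" "hom1 K Y X j" "hom1 K W Y j'" "s1 K f = X"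
  have "wr K (wr K a j) j' = hc K a (hc K (id2 K j) (id2 K j'))"
    unfolding wr_def
    by (rule hc_assoc[symmetric, OF _ _ a(1)]) (use a in \<open>auto simp: hom1_def intro: id2_cell\<close>)
  also have "\<dots> = wr K a (c1 K j j')"
    unfolding wr_def using hc_id a by (auto simp: hom1_def)
  finally show ?thesis .
qed

lemma wr_wl: "hom1 K Y Z h \<Longrightarrow> cell K f g a \<Longrightarrow> t1 K f = Y \<Longrightarrow> hom1 K X W j \<Longrightarrow> s1 K f = W \<Longrightarrow>
   wr K (wl K h a) j = wl K h (wr K a j)"
  unfolding wr_def wl_def
  by (rule hc_assoc[symmetric]) (auto simp: hom1_def intro: id2_cell)

lemma exch: "cell K h h' \<theta> \<Longrightarrow> cell K g k \<kappa> \<Longrightarrow> t1 K g = s1 K h \<Longrightarrow>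
   vc K (wl K h' \<kappa>) (wr K \<theta> g) = vc K (wr K \<theta> k) (wl K h \<kappa>)"
proof -
  assume a: "cell K h h' \<theta>" "cell K g k \<kappa>" "t1 K g = s1 K h"
  have c: "h \<in> ar K" "h' \<in> ar K" "g \<in> ar K" "k \<in> ar K" using a cell_ar by blast+
  have "vc K (wl K h' \<kappa>) (wr K \<theta> g) = hc K (vc K (id2 K h') \<theta>) (vc K \<kappa> (id2 K g))"
    unfolding wl_def wr_def
    by (rule interchange[symmetric, OF id2_cell[OF c(3)] a(2) a(1) id2_cell[OF c(2)]]) (use a in auto)
  also have "\<dots> = hc K \<theta> \<kappa>" using a vc_idl vc_idr by metis
  also have "\<dots> = hc K (vc K \<theta> (id2 K h)) (vc K (id2 K k) \<kappa>)" using a vc_idl vc_idr by metis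
  also have "\<dots> = vc K (wr K \<theta> k) (wl K h \<kappa>)"
    unfolding wl_def wr_def
    by (rule interchange[OF a(2) id2_cell[OF c(4)] id2_cell[OF c(1)] a(1)]) (use a in auto)
  finally show ?thesis .
qed

end

lemma bij_comp_iff:
  assumes G: "bij_betw G B C" and FH: "\<forall>x\<in>A. F x = G (H x)" and HA: "H ` A \<subseteq> B"
  shows "bij_betw F A C \<longleftrightarrow> bij_betw H A B"
proof
  assume F: "bij_betw F A C"
  have "bij_betw (inv_into B G \<circ> F) A B"
    using bij_betw_trans[OF F bij_betw_inv_into[OF G]] .
  moreover have "\<forall>x\<in>A. (inv_into B G \<circ> F) x = H x"
    using FH HA G by (auto simp: bij_betw_def inv_into_f_f)
  ultimately show "bij_betw H A B" using bij_betw_cong by metis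
next
  assume "bij_betw H A B"
  then have "bij_betw (G \<circ> H) A C" using bij_betw_trans G by blast
  then show "bij_betw F A C" using FH bij_betw_cong[of A F "G \<circ> H"] by auto
qed

context tc
begin

lemma paste:
  assumes psi: "left_lifting K \<psi> y g2 h2" and c: "cell K g2 (c1 K h1 g1) \<psi>'"
    and h1: "hom1 K (t1 K g1) (t1 K g2) h1" and g1: "g1 \<in> ar K" and s: "s1 K g1 = s1 K g2"
  shows "left_lifting K (vc K (wl K h2 \<psi>') \<psi>) y g1 (c1 K h2 h1) \<longleftrightarrow> left_lifting K \<psi>' g2 g1 h1"
proof -
  from psi have p: "y \<in> ar K" "g2 \<in> ar K" "h2 \<in> ar K" "s1 K g2 = s1 K y" "t1 K g2 = s1 K h2"
    "t1 K h2 = t1 K y" "cell K y (c1 K h2 g2) \<psi>"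
    and pb: "\<forall>k. hom1 K (s1 K g2) (t1 K g2) k \<longrightarrow>
        bij_betw (\<lambda>\<kappa>. vc K (wl K h2 \<kappa>) \<psi>) {\<kappa>. cell K g2 k \<kappa>} {\<psi>'. cell K y (c1 K h2 k) \<psi>'}"
    unfolding left_lifting_def by auto
  have h2: "hom1 K (t1 K g2) (t1 K y) h2" using p by (simp add: hom1_def)
  have hh: "hom1 K (t1 K g1) (t1 K y) (c1 K h2 h1)" using comp_hom[OF h1 h2] .
  have g1h: "hom1 K (s1 K y) (t1 K g1) g1" using g1 s p by (simp add: hom1_def)
  have ccell: "cell K y (c1 K (c1 K h2 h1) g1) (vc K (wl K h2 \<psi>') \<psi>)"
  proof -
    have "cell K (c1 K h2 g2) (c1 K h2 (c1 K h1 g1)) (wl K h2 \<psi>')"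
      by (rule wl_cell[OF h2 c]) simp
    then show ?thesis using vc_cell[OF p(7)] assoc[OF g1h h1 h2] by simp
  qed
  have struct1: "y \<in> ar K \<and> g1 \<in> ar K \<and> c1 K h2 h1 \<in> ar K \<and>
     s1 K g1 = s1 K y \<and> t1 K g1 = s1 K (c1 K h2 h1) \<and> t1 K (c1 K h2 h1) = t1 K y \<and>
     cell K y (c1 K (c1 K h2 h1) g1) (vc K (wl K h2 \<psi>') \<psi>)"
    using hh ccell p g1 s by (auto simp: hom1_def)
  have struct2: "g2 \<in> ar K \<and> g1 \<in> ar K \<and> h1 \<in> ar K \<and>
     s1 K g1 = s1 K g2 \<and> t1 K g1 = s1 K h1 \<and> t1 K h1 = t1 K g2 \<and> cell K g2 (c1 K h1 g1) \<psi>'"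
    using h1 c g1 s p by (auto simp: hom1_def)
  have key: "bij_betw (\<lambda>\<kappa>. vc K (wl K (c1 K h2 h1) \<kappa>) (vc K (wl K h2 \<psi>') \<psi>))
        {\<kappa>. cell K g1 k \<kappa>} {\<phi>. cell K y (c1 K (c1 K h2 h1) k) \<phi>}
     \<longleftrightarrow> bij_betw (\<lambda>\<kappa>. vc K (wl K h1 \<kappa>) \<psi>') {\<kappa>. cell K g1 k \<kappa>} {\<phi>. cell K g2 (c1 K h1 k) \<phi>}"
    if k: "hom1 K (s1 K g1) (t1 K g1) k" for k
  proof (rule bij_comp_iff)
    have h1k: "hom1 K (s1 K g2) (t1 K g2) (c1 K h1 k)" using comp_hom[OF k h1] s by simp
    have e: "c1 K (c1 K h2 h1) k = c1 K h2 (c1 K h1 k)" using assoc[OF k h1 h2] by simp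
    show "bij_betw (\<lambda>\<rho>. vc K (wl K h2 \<rho>) \<psi>) {\<kappa>. cell K g2 (c1 K h1 k) \<kappa>}
          {\<phi>. cell K y (c1 K (c1 K h2 h1) k) \<phi>}"
      using pb h1k e by simp
    show "(\<lambda>\<kappa>. vc K (wl K h1 \<kappa>) \<psi>') ` {\<kappa>. cell K g1 k \<kappa>} \<subseteq> {\<phi>. cell K g2 (c1 K h1 k) \<phi>}"
    proof
      fix x assume "x \<in> (\<lambda>\<kappa>. vc K (wl K h1 \<kappa>) \<psi>') ` {\<kappa>. cell K g1 k \<kappa>}"
      then obtain \<kappa> where kk: "cell K g1 k \<kappa>" and x: "x = vc K (wl K h1 \<kappa>) \<psi>'" by auto
      have "cell K (c1 K h1 g1) (c1 K h1 k) (wl K h1 \<kappa>)" by (rule wl_cell[OF h1 kk]) simp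
      then show "x \<in> {\<phi>. cell K g2 (c1 K h1 k) \<phi>}" using x vc_cell[OF c] by simp
    qed
    show "\<forall>\<kappa>\<in>{\<kappa>. cell K g1 k \<kappa>}. vc K (wl K (c1 K h2 h1) \<kappa>) (vc K (wl K h2 \<psi>') \<psi>) =
        vc K (wl K h2 (vc K (wl K h1 \<kappa>) \<psi>')) \<psi>"
    proof
      fix \<kappa> assume "\<kappa> \<in> {\<kappa>. cell K g1 k \<kappa>}"
      then have kk: "cell K g1 k \<kappa>" by simp
      have w1: "cell K (c1 K h1 g1) (c1 K h1 k) (wl K h1 \<kappa>)" by (rule wl_cell[OF h1 kk]) simp
      have w2: "cell K (c1 K h2 (c1 K h1 g1)) (c1 K h2 (c1 K h1 k)) (wl K h2 (wl K h1 \<kappa>))"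
        by (rule wl_cell[OF h2 w1]) (use comp_hom[OF g1h h1] in \<open>simp add: hom1_def\<close>)
      have w3: "cell K (c1 K h2 g2) (c1 K h2 (c1 K h1 g1)) (wl K h2 \<psi>')"
        by (rule wl_cell[OF h2 c]) simp
      have "vc K (wl K h2 (vc K (wl K h1 \<kappa>) \<psi>')) \<psi> =
            vc K (vc K (wl K h2 (wl K h1 \<kappa>)) (wl K h2 \<psi>')) \<psi>"
        using wl_vc[OF h2 c w1] by simp
      also have "\<dots> = vc K (wl K h2 (wl K h1 \<kappa>)) (vc K (wl K h2 \<psi>') \<psi>)"
        using vc_assoc[OF p(7) w3 w2] by simp
      also have "\<dots> = vc K (wl K (c1 K h2 h1) \<kappa>) (vc K (wl K h2 \<psi>') \<psi>)"
        using wl_comp[OF h1 h2 kk] by simp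
      finally show "vc K (wl K (c1 K h2 h1) \<kappa>) (vc K (wl K h2 \<psi>') \<psi>) =
        vc K (wl K h2 (vc K (wl K h1 \<kappa>) \<psi>')) \<psi>" by simp
    qed
  qed
  have t: "t1 K g1 = t1 K g1" "s1 K (c1 K h2 h1) = t1 K g1" using hh by (auto simp: hom1_def)
  show ?thesis
    unfolding left_lifting_def using struct1 struct2 key t by auto
qed

end

context tc
begin

lemma paste_abs:
  assumes psi: "abs_left_lifting K \<psi> y g2 h2" and c: "cell K g2 (c1 K h1 g1) \<psi>'"
    and h1: "hom1 K (t1 K g1) (t1 K g2) h1" and g1: "g1 \<in> ar K" and s: "s1 K g1 = s1 K g2"
  shows "abs_left_lifting K (vc K (wl K h2 \<psi>') \<psi>) y g1 (c1 K h2 h1) \<longleftrightarrow> abs_left_lifting K \<psi>' g2 g1 h1"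
proof -
  from psi have ll: "left_lifting K \<psi> y g2 h2"
    and lj: "\<And>D j. hom1 K D (s1 K y) j \<Longrightarrow> left_lifting K (wr K \<psi> j) (c1 K y j) (c1 K g2 j) h2"
    unfolding abs_left_lifting_def by auto
  from ll have p: "y \<in> ar K" "g2 \<in> ar K" "h2 \<in> ar K" "s1 K g2 = s1 K y" "t1 K g2 = s1 K h2"
    "t1 K h2 = t1 K y" "cell K y (c1 K h2 g2) \<psi>"
    unfolding left_lifting_def by auto
  have h2: "hom1 K (t1 K g2) (t1 K y) h2" using p by (simp add: hom1_def)
  have g1h: "hom1 K (s1 K y) (t1 K g1) g1" using g1 s p by (simp add: hom1_def)
  have w3: "cell K (c1 K h2 g2) (c1 K h2 (c1 K h1 g1)) (wl K h2 \<psi>')"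
    by (rule wl_cell[OF h2 c]) simp
  have jj: "left_lifting K (wr K (vc K (wl K h2 \<psi>') \<psi>) j) (c1 K y j) (c1 K g1 j) (c1 K h2 h1)
     \<longleftrightarrow> left_lifting K (wr K \<psi>' j) (c1 K g2 j) (c1 K g1 j) h1"
    if j: "hom1 K D (s1 K y) j" for D j
  proof -
    have e1: "wr K (vc K (wl K h2 \<psi>') \<psi>) j = vc K (wl K h2 (wr K \<psi>' j)) (wr K \<psi> j)"
      using wr_vc[OF p(7) w3 j] wr_wl[OF h2 c _ j] p by (simp add: cell_ar[OF c])
    have c': "cell K (c1 K g2 j) (c1 K h1 (c1 K g1 j)) (wr K \<psi>' j)"
      using wr_cell[OF c j] assoc[OF j g1h h1] p by simp
    have g1j: "hom1 K D (t1 K g1) (c1 K g1 j)" using comp_hom[OF j g1h] .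
    have g2j: "hom1 K D (t1 K g2) (c1 K g2 j)" using comp_hom[OF j] p by (simp add: hom1_def)
    have h1': "hom1 K (t1 K (c1 K g1 j)) (t1 K (c1 K g2 j)) h1"
      using h1 g1j g2j by (simp add: hom1_def)
    have "left_lifting K (vc K (wl K h2 (wr K \<psi>' j)) (wr K \<psi> j)) (c1 K y j) (c1 K g1 j) (c1 K h2 h1)
       \<longleftrightarrow> left_lifting K (wr K \<psi>' j) (c1 K g2 j) (c1 K g1 j) h1"
      by (rule paste[OF lj[OF j] c' h1']) (use g1j g2j in \<open>auto simp: hom1_def\<close>)
    then show ?thesis using e1 by simp
  qed
  have pl: "left_lifting K (vc K (wl K h2 \<psi>') \<psi>) y g1 (c1 K h2 h1) \<longleftrightarrow> left_lifting K \<psi>' g2 g1 h1"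
    by (rule paste[OF ll c h1 g1 s])
  show ?thesis unfolding abs_left_lifting_def using pl jj p(4) by auto
qed

lemma iso_ll:
  assumes ll: "left_lifting K \<phi> f g h" and th: "iso2 K \<theta> h h'"
  shows "left_lifting K (vc K (wr K \<theta> g) \<phi>) f g h'"
proof -
  from ll have p: "f \<in> ar K" "g \<in> ar K" "h \<in> ar K" "s1 K g = s1 K f" "t1 K g = s1 K h"
    "t1 K h = t1 K f" "cell K f (c1 K h g) \<phi>"
    and pb: "\<And>k. hom1 K (s1 K g) (t1 K g) k \<Longrightarrow>
        bij_betw (\<lambda>\<kappa>. vc K (wl K h \<kappa>) \<phi>) {\<kappa>. cell K g k \<kappa>} {\<psi>. cell K f (c1 K h k) \<psi>}"
    unfolding left_lifting_def by auto
  from th obtain \<theta>' where t: "cell K h h' \<theta>" "cell K h' h \<theta>'" "vc K \<theta>' \<theta> = id2 K h"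
    "vc K \<theta> \<theta>' = id2 K h'" unfolding iso2_def by auto
  have hh: "h' \<in> ar K" "s1 K h' = s1 K h" "t1 K h' = t1 K h" using cell_ar[OF t(1)] by auto
  have gh: "hom1 K (s1 K g) (s1 K h) g" using p by (simp add: hom1_def)
  have hH: "hom1 K (s1 K h) (t1 K f) h" using p by (simp add: hom1_def)
  have hH': "hom1 K (s1 K h) (t1 K f) h'" using p hh by (simp add: hom1_def)
  have tg: "cell K (c1 K h g) (c1 K h' g) (wr K \<theta> g)" using wr_cell[OF t(1) gh] by simp
  have cc: "cell K f (c1 K h' g) (vc K (wr K \<theta> g) \<phi>)" using vc_cell[OF p(7) tg] .
  have key: "bij_betw (\<lambda>\<kappa>. vc K (wl K h' \<kappa>) (vc K (wr K \<theta> g) \<phi>)) {\<kappa>. cell K g k \<kappa>}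
          {\<psi>. cell K f (c1 K h' k) \<psi>}"
    if k: "hom1 K (s1 K g) (t1 K g) k" for k
  proof -
    have k': "hom1 K (s1 K g) (s1 K h) k" using k p by simp
    have tk: "cell K (c1 K h k) (c1 K h' k) (wr K \<theta> k)" using wr_cell[OF t(1) k'] by simp
    have tk': "cell K (c1 K h' k) (c1 K h k) (wr K \<theta>' k)" using wr_cell[OF t(2) k'] hh by simp
    have i1: "vc K (wr K \<theta>' k) (wr K \<theta> k) = id2 K (c1 K h k)"
      using wr_vc[OF t(1) t(2) k'] t(3) wr_id[OF k' hH] by simp
    have i2: "vc K (wr K \<theta> k) (wr K \<theta>' k) = id2 K (c1 K h' k)"
      using wr_vc[OF t(2) t(1) k'] t(4) wr_id[OF k' hH'] hh by simp
    have G: "bij_betw (\<lambda>\<rho>. vc K (wr K \<theta> k) \<rho>) {\<psi>. cell K f (c1 K h k) \<psi>} {\<psi>. cell K f (c1 K h' k) \<psi>}"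
    proof (rule bij_betw_byWitness[where f'="\<lambda>\<rho>. vc K (wr K \<theta>' k) \<rho>"])
      show "(\<lambda>\<rho>. vc K (wr K \<theta> k) \<rho>) ` {\<psi>. cell K f (c1 K h k) \<psi>} \<subseteq> {\<psi>. cell K f (c1 K h' k) \<psi>}"
        using vc_cell[OF _ tk] by auto
      show "(\<lambda>\<rho>. vc K (wr K \<theta>' k) \<rho>) ` {\<psi>. cell K f (c1 K h' k) \<psi>} \<subseteq> {\<psi>. cell K f (c1 K h k) \<psi>}"
        using vc_cell[OF _ tk'] by auto
      show "\<forall>x\<in>{\<psi>. cell K f (c1 K h k) \<psi>}. vc K (wr K \<theta>' k) (vc K (wr K \<theta> k) x) = x"
        using vc_assoc[OF _ tk tk'] i1 vc_idl by auto
      show "\<forall>x\<in>{\<psi>. cell K f (c1 K h' k) \<psi>}. vc K (wr K \<theta> k) (vc K (wr K \<theta>' k) x) = x"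
        using vc_assoc[OF _ tk' tk] i2 vc_idl by auto
    qed
    have eq: "\<forall>\<kappa>\<in>{\<kappa>. cell K g k \<kappa>}. vc K (wl K h' \<kappa>) (vc K (wr K \<theta> g) \<phi>) =
         vc K (wr K \<theta> k) (vc K (wl K h \<kappa>) \<phi>)"
    proof
      fix \<kappa> assume "\<kappa> \<in> {\<kappa>. cell K g k \<kappa>}"
      then have kk: "cell K g k \<kappa>" by simp
      have wl1: "cell K (c1 K h' g) (c1 K h' k) (wl K h' \<kappa>)" using wl_cell[OF hH' kk] p by simp
      have wl2: "cell K (c1 K h g) (c1 K h k) (wl K h \<kappa>)" using wl_cell[OF hH kk] p by simp
      have "vc K (wl K h' \<kappa>) (vc K (wr K \<theta> g) \<phi>) = vc K (vc K (wl K h' \<kappa>) (wr K \<theta> g)) \<phi>"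
        using vc_assoc[OF p(7) tg wl1] .
      also have "\<dots> = vc K (vc K (wr K \<theta> k) (wl K h \<kappa>)) \<phi>" using exch[OF t(1) kk] p by simp
      also have "\<dots> = vc K (wr K \<theta> k) (vc K (wl K h \<kappa>) \<phi>)"
        using vc_assoc[OF p(7) wl2 tk] by simp
      finally show "vc K (wl K h' \<kappa>) (vc K (wr K \<theta> g) \<phi>) = vc K (wr K \<theta> k) (vc K (wl K h \<kappa>) \<phi>)" .
    qed
    have Hm: "(\<lambda>\<kappa>. vc K (wl K h \<kappa>) \<phi>) ` {\<kappa>. cell K g k \<kappa>} \<subseteq> {\<psi>. cell K f (c1 K h k) \<psi>}"
      using pb[OF k] by (auto simp: bij_betw_def)
    show ?thesis using bij_comp_iff[OF G eq Hm] pb[OF k] by simp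
  qed
  show ?thesis unfolding left_lifting_def using p hh cc key by auto
qed

lemma iso_abs:
  assumes ll: "abs_left_lifting K \<phi> f g h" and th: "iso2 K \<theta> h h'"
  shows "abs_left_lifting K (vc K (wr K \<theta> g) \<phi>) f g h'"
proof -
  from ll have l0: "left_lifting K \<phi> f g h"
    and lj: "\<And>D j. hom1 K D (s1 K f) j \<Longrightarrow> left_lifting K (wr K \<phi> j) (c1 K f j) (c1 K g j) h"
    unfolding abs_left_lifting_def by auto
  from l0 have p: "f \<in> ar K" "g \<in> ar K" "h \<in> ar K" "s1 K g = s1 K f" "t1 K g = s1 K h"
    "t1 K h = t1 K f" "cell K f (c1 K h g) \<phi>"
    unfolding left_lifting_def by auto
  from th have t: "cell K h h' \<theta>" unfolding iso2_def by auto
  have gh: "hom1 K (s1 K f) (s1 K h) g" using p by (simp add: hom1_def)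
  have tg: "cell K (c1 K h g) (c1 K h' g) (wr K \<theta> g)" using wr_cell[OF t gh] by simp
  have "left_lifting K (wr K (vc K (wr K \<theta> g) \<phi>) j) (c1 K f j) (c1 K g j) h'"
    if j: "hom1 K D (s1 K f) j" for D j
  proof -
    have "wr K (vc K (wr K \<theta> g) \<phi>) j = vc K (wr K (wr K \<theta> g) j) (wr K \<phi> j)"
      using wr_vc[OF p(7) tg j] by simp
    also have "\<dots> = vc K (wr K \<theta> (c1 K g j)) (wr K \<phi> j)"
      using wr_comp[OF t gh j] by simp
    finally show ?thesis using iso_ll[OF lj[OF j] th] by simp
  qed
  then show ?thesis unfolding abs_left_lifting_def using iso_ll[OF l0 th] by auto
qed

lemma ext_unique:
  assumes e1: "left_ext K \<phi> f g h" and e2: "left_ext K \<phi>' f g h'"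
  shows "\<exists>\<theta>. iso2 K \<theta> h h'"
proof -
  from e1 have p: "f \<in> ar K" "g \<in> ar K" "h \<in> ar K" "s1 K g = s1 K f" "t1 K g = s1 K h"
    "t1 K h = t1 K f" "cell K f (c1 K h g) \<phi>"
    and b1: "\<And>k. hom1 K (s1 K h) (t1 K h) k \<Longrightarrow>
        bij_betw (\<lambda>\<kappa>. vc K (wr K \<kappa> g) \<phi>) {\<kappa>. cell K h k \<kappa>} {\<psi>. cell K f (c1 K k g) \<psi>}"
    unfolding left_ext_def by auto
  from e2 have q: "h' \<in> ar K" "t1 K g = s1 K h'"
    "t1 K h' = t1 K f" "cell K f (c1 K h' g) \<phi>'"
    and b2: "\<And>k. hom1 K (s1 K h') (t1 K h') k \<Longrightarrow>
        bij_betw (\<lambda>\<kappa>. vc K (wr K \<kappa> g) \<phi>') {\<kappa>. cell K h' k \<kappa>} {\<psi>. cell K f (c1 K k g) \<psi>}"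
    unfolding left_ext_def by auto
  have hH: "hom1 K (s1 K h) (t1 K h) h" using p by (simp add: hom1_def)
  have hH': "hom1 K (s1 K h) (t1 K h) h'" using p q by (simp add: hom1_def)
  have gH: "hom1 K (s1 K f) (s1 K h) g" using p by (simp add: hom1_def)
  have B1h: "bij_betw (\<lambda>\<kappa>. vc K (wr K \<kappa> g) \<phi>) {\<kappa>. cell K h h \<kappa>} {\<psi>. cell K f (c1 K h g) \<psi>}"
    using b1[OF hH] .
  have B1h': "bij_betw (\<lambda>\<kappa>. vc K (wr K \<kappa> g) \<phi>) {\<kappa>. cell K h h' \<kappa>} {\<psi>. cell K f (c1 K h' g) \<psi>}"
    using b1[OF hH'] .
  have B2h: "bij_betw (\<lambda>\<kappa>. vc K (wr K \<kappa> g) \<phi>') {\<kappa>. cell K h' h \<kappa>} {\<psi>. cell K f (c1 K h g) \<psi>}"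
    using b2 hH p q by (simp add: hom1_def)
  have B2h': "bij_betw (\<lambda>\<kappa>. vc K (wr K \<kappa> g) \<phi>') {\<kappa>. cell K h' h' \<kappa>} {\<psi>. cell K f (c1 K h' g) \<psi>}"
    using b2 hH' p q by (simp add: hom1_def)
  obtain \<alpha> where a: "cell K h h' \<alpha>" "vc K (wr K \<alpha> g) \<phi> = \<phi>'"
    using B1h' q(4) unfolding bij_betw_def by (metis (no_types, lifting) imageE mem_Collect_eq)
  obtain \<beta> where b: "cell K h' h \<beta>" "vc K (wr K \<beta> g) \<phi>' = \<phi>"
    using B2h p(7) unfolding bij_betw_def by (metis (no_types, lifting) imageE mem_Collect_eq)
  have ag: "cell K (c1 K h g) (c1 K h' g) (wr K \<alpha> g)" using wr_cell[OF a(1) gH] by simp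
  have bg: "cell K (c1 K h' g) (c1 K h g) (wr K \<beta> g)" using wr_cell[OF b(1) gH] q p by simp
  have ba: "cell K h h (vc K \<beta> \<alpha>)" using vc_cell[OF a(1) b(1)] .
  have ab: "cell K h' h' (vc K \<alpha> \<beta>)" using vc_cell[OF b(1) a(1)] .
  have "vc K (wr K (vc K \<beta> \<alpha>) g) \<phi> = vc K (wr K (id2 K h) g) \<phi>"
  proof -
    have "vc K (wr K (vc K \<beta> \<alpha>) g) \<phi> = vc K (vc K (wr K \<beta> g) (wr K \<alpha> g)) \<phi>"
      using wr_vc[OF a(1) b(1) gH] by simp
    also have "\<dots> = \<phi>" using vc_assoc[OF p(7) ag bg] a(2) b(2) by simp
    also have "\<dots> = vc K (wr K (id2 K h) g) \<phi>" using wr_id[OF gH hH] vc_idl[OF p(7)] by simp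
    finally show ?thesis .
  qed
  then have i1: "vc K \<beta> \<alpha> = id2 K h"
    using B1h ba id2_cell[OF p(3)] unfolding bij_betw_def inj_on_def by auto
  have "vc K (wr K (vc K \<alpha> \<beta>) g) \<phi>' = vc K (wr K (id2 K h') g) \<phi>'"
  proof -
    have "vc K (wr K (vc K \<alpha> \<beta>) g) \<phi>' = vc K (vc K (wr K \<alpha> g) (wr K \<beta> g)) \<phi>'"
      using wr_vc[OF b(1) a(1)] gH q p by simp
    also have "\<dots> = \<phi>'" using vc_assoc[OF q(4) bg ag] a(2) b(2) by simp
    also have "\<dots> = vc K (wr K (id2 K h') g) \<phi>'" using wr_id[OF gH hH'] vc_idl[OF q(4)] by simp
    finally show ?thesis .
  qed
  then have i2: "vc K \<alpha> \<beta> = id2 K h'"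
    using B2h' ab id2_cell[OF q(1)] unfolding bij_betw_def inj_on_def by auto
  show ?thesis unfolding iso2_def using a(1) b(1) i1 i2 by blast
qed

end

theorem corollary3p11:
  fixes K :: "('o,'a,'c) tcat" and Y :: "('o,'a,'c) ystr"
  assumes "twocat K" and "fin_complete K" and "good_yoneda K Y"
    and "small K Y C"
    and "hom1 K M (PP Y C) i" and "hom1 K C A f"
    and "adm_ob Y K M" and "adm Y f"
  shows "has_wcolimit K Y i f \<longleftrightarrow>
    (\<exists>col. adm Y col \<and> hom1 K M A col \<and>
       (\<exists>\<theta>. iso2 K \<theta> (rep Y col) (c1 K (rep Y i) (rep Y f))))"
proof -
  interpret tc K by (rule tc.intro) (rule assms(1))
  note gy = assms(3)[unfolded good_yoneda_def]
  have adm_ar: "\<And>g. adm Y g \<Longrightarrow> g \<in> ar K" using gy by blast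
  have adm_comp: "\<And>g h. adm Y g \<Longrightarrow> h \<in> ar K \<Longrightarrow> t1 K h = s1 K g \<Longrightarrow> adm Y (c1 K g h)"
    using gy by blast
  have rep_ax: "\<And>g. adm Y g \<Longrightarrow> adm_ob Y K (s1 K g) \<Longrightarrow>
        hom1 K (t1 K g) (PP Y (s1 K g)) (rep Y g) \<and>
        cell K (yo Y (s1 K g)) (c1 K (rep Y g) g) (chi Y g) \<and>
        abs_left_lifting K (chi Y g) (yo Y (s1 K g)) g (rep Y g)"
    using gy by blast
  have ext_ax: "\<And>g k \<psi>. adm Y g \<Longrightarrow> adm_ob Y K (s1 K g) \<Longrightarrow>
        abs_left_lifting K \<psi> (yo Y (s1 K g)) g k \<Longrightarrow> left_ext K \<psi> (yo Y (s1 K g)) g k"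
    using gy unfolding pw_left_ext_def by blast
  have admPC: "adm Y (id1 K (PP Y C))" using assms(4) unfolding small_def adm_ob_def by simp
  have i_hom: "hom1 K M (PP Y C) i" by fact
  have admi: "adm Y i"
    using adm_comp[OF admPC hom_ar[OF i_hom]] idl[OF i_hom] i_hom adm_ar[OF admPC]
      id1_hom ar_ob by (metis hom1_def)
  have si: "s1 K i = M" "t1 K i = PP Y C" using i_hom by (auto simp: hom1_def)
  have sf: "s1 K f = C" "t1 K f = A" using assms(6) by (auto simp: hom1_def)
  have admC: "adm_ob Y K C" using assms(4) unfolding small_def by simp
  from rep_ax[OF admi] si assms(7) have
    ri: "hom1 K (PP Y C) (PP Y M) (rep Y i)"
    and ci: "cell K (yo Y M) (c1 K (rep Y i) i) (chi Y i)"
    and ai: "abs_left_lifting K (chi Y i) (yo Y M) i (rep Y i)" by auto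
  from rep_ax[OF assms(8)] sf admC have
    rf: "hom1 K A (PP Y C) (rep Y f)" by auto
  show ?thesis
  proof
    assume "has_wcolimit K Y i f"
    then obtain col \<eta> where adc: "adm Y col" and colh: "hom1 K M A col"
      and ce: "cell K i (c1 K (rep Y f) col) \<eta>" and ae: "abs_left_lifting K \<eta> i col (rep Y f)"
      unfolding has_wcolimit_def is_wcolimit_def using si sf by auto
    have scol: "s1 K col = M" "t1 K col = A" using colh by (auto simp: hom1_def)
    have comp: "abs_left_lifting K (vc K (wl K (rep Y i) \<eta>) (chi Y i)) (yo Y M) col
        (c1 K (rep Y i) (rep Y f))"
      using paste_abs[OF ai ce, of ] rf si scol hom_ar[OF colh] ae by (simp add: hom1_def)
    have e1: "left_ext K (vc K (wl K (rep Y i) \<eta>) (chi Y i)) (yo Y M) col (c1 K (rep Y i) (rep Y f))"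
      using ext_ax[OF adc] comp scol assms(7) by simp
    have e2: "left_ext K (chi Y col) (yo Y M) col (rep Y col)"
      using ext_ax[OF adc] rep_ax[OF adc] scol assms(7) by simp
    obtain \<theta> where "iso2 K \<theta> (rep Y col) (c1 K (rep Y i) (rep Y f))"
      using ext_unique[OF e2 e1] by blast
    then show "\<exists>col. adm Y col \<and> hom1 K M A col \<and>
       (\<exists>\<theta>. iso2 K \<theta> (rep Y col) (c1 K (rep Y i) (rep Y f)))" using adc colh by blast
  next
    assume "\<exists>col. adm Y col \<and> hom1 K M A col \<and>
       (\<exists>\<theta>. iso2 K \<theta> (rep Y col) (c1 K (rep Y i) (rep Y f)))"
    then obtain col \<theta> where adc: "adm Y col" and colh: "hom1 K M A col"
      and th: "iso2 K \<theta> (rep Y col) (c1 K (rep Y i) (rep Y f))" by blast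
    have scol: "s1 K col = M" "t1 K col = A" using colh by (auto simp: hom1_def)
    have ac: "abs_left_lifting K (chi Y col) (yo Y M) col (rep Y col)"
      using rep_ax[OF adc] scol assms(7) by simp
    define \<sigma> where "\<sigma> = vc K (wr K \<theta> col) (chi Y col)"
    have as: "abs_left_lifting K \<sigma> (yo Y M) col (c1 K (rep Y i) (rep Y f))"
      unfolding \<sigma>_def by (rule iso_abs[OF ac th])
    have sc: "cell K (yo Y M) (c1 K (rep Y i) (c1 K (rep Y f) col)) \<sigma>"
      using as assoc[OF colh rf ri] unfolding abs_left_lifting_def left_lifting_def by simp
    have k: "hom1 K (s1 K i) (t1 K i) (c1 K (rep Y f) col)" using comp_hom[OF colh rf] si by simp
    have bi: "bij_betw (\<lambda>\<kappa>. vc K (wl K (rep Y i) \<kappa>) (chi Y i)) {\<kappa>. cell K i (c1 K (rep Y f) col) \<kappa>}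
        {\<psi>. cell K (yo Y M) (c1 K (rep Y i) (c1 K (rep Y f) col)) \<psi>}"
      using ai k unfolding abs_left_lifting_def left_lifting_def by blast
    obtain \<eta> where ce: "cell K i (c1 K (rep Y f) col) \<eta>"
      and eq: "vc K (wl K (rep Y i) \<eta>) (chi Y i) = \<sigma>"
      using bi sc unfolding bij_betw_def by (metis (no_types, lifting) imageE mem_Collect_eq)
    have ae: "abs_left_lifting K \<eta> i col (rep Y f)"
      using paste_abs[OF ai ce] rf si scol hom_ar[OF colh] as eq by (simp add: hom1_def)
    show "has_wcolimit K Y i f"
      unfolding has_wcolimit_def is_wcolimit_def using adc colh ce ae si sf by auto
  qed
qed

end
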